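(* Let $\mathbb{P}: M_2 \to M_2$ be the linear map $$\mathbb{P}\begin{pmatrix} x_{11} & x_{12} \\ x_{21} & x_{22}\end{pmatrix} = \begin{pmatrix} \frac{x_{11}+x_{22}}{2} & x_{12} \\ x_{21} & \frac{x_{11}+x_{22}}{2}\end{pmatrix},$$ and define on operators on $\mathbb{C}^2\otimes\mathbb{C}^2\otimes\mathbb{C}^2$ $$\Phi_3(\varrho) = (\mathbb{P}\otimes\mathbb{I}\otimes\mathbb{I})(\varrho) + (\mathbb{I}\otimes\mathbb{P}\otimes\mathbb{I})(\varrho) + (\mathbb{I}\otimes\mathbb{I}\otimes\mathbb{P})(\varrho) + \tfrac12\,\mathrm{Tr}(\varrho)\, I,$$ with $\mathbb{I}$ the identity map on $M_2$ and $I$ the $8\times8$ identity. Let $|GHZ\rangle=\frac{1}{\sqrt2}(|000\rangle+|111\rangle)$ and $\mathcal{W}=\Phi_3(|GHZ\rangle\langle GHZ|)$. Then $\mathcal{W}$ is a genuine tripartite entanglement witness: $\mathrm{Tr}(\mathcal{W}\rho)\ge 0$ for every biseparable three-qubit state $\rho$, while for the genuinely entangled state $|\widetilde{GHZ}\rangle=\frac{1}{\sqrt2}(|000\rangle-|111\rangle)$ one has $\mathrm{Tr}(\mathcal{W}\,|\widetilde{GHZ}\rangle\langle\widetilde{GHZ}|)=-\frac14<0$.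
   Context: A three-qubit state $\rho$ is biseparable if it can be written as $\rho = p_1\,\rho_1\otimes\rho_{23} + p_2\,\rho_2\otimes\rho_{13} + p_3\,\rho_3\otimes\rho_{12}$ (each term across the indicated bipartition $1|23$, $2|13$, $3|12$), where $p_i\ge 0$, $\sum_i p_i=1$, and $\rho_i$, $\rho_{jk}$ are density matrices on the indicated qubits; a state that is not biseparable is genuinely (tripartite) entangled. $M_2$ is the space of complex $2\times 2$ matrices and $\{|0\rangle,|1\rangle\}$ the standard basis of $\mathbb{C}^2$. *)

theory Defs
  imports "HOL-Analysis.Analysis"
begin

text \<open>Qubit index type: the numeral type 2 = {0,1}; three-qubit index = 2 x 2 x 2,
  ordered as (qubit 1, qubit 2, qubit 3). Matrices are HOL-Analysis matrices.\<close>

type_synonym qidx = "2"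
type_synonym idx2 = "2 \<times> 2"
type_synonym idx3 = "2 \<times> 2 \<times> 2"
type_synonym mat2 = "complex^2^2"
type_synonym mat4 = "complex^idx2^idx2"
type_synonym mat8 = "complex^idx3^idx3"

definition cmat_adj :: "complex^'n^'n \<Rightarrow> complex^'n^'n" where
  "cmat_adj A = (\<chi> i j. cnj (A $ j $ i))"

definition hermitian_mat :: "complex^'n^'n \<Rightarrow> bool" where
  "hermitian_mat A \<longleftrightarrow> cmat_adj A = A"

definition psd_mat :: "complex^'n^'n \<Rightarrow> bool" where
  "psd_mat A \<longleftrightarrow> (\<forall>v :: complex^'n.
     let q = (\<Sum>i\<in>UNIV. cnj (v $ i) * (A *v v) $ i) in Im q = 0 \<and> 0 \<le> Re q)"

definition density_mat :: "complex^'n^'n \<Rightarrow> bool" where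
  "density_mat A \<longleftrightarrow> hermitian_mat A \<and> psd_mat A \<and> trace A = 1"

definition tensor_1_23 :: "mat2 \<Rightarrow> mat4 \<Rightarrow> mat8" where
  "tensor_1_23 A B = (\<chi> i j. case (i, j) of ((i1,i2,i3), (j1,j2,j3)) \<Rightarrow> A $ i1 $ j1 * B $ (i2,i3) $ (j2,j3))"

definition tensor_2_13 :: "mat2 \<Rightarrow> mat4 \<Rightarrow> mat8" where
  "tensor_2_13 A B = (\<chi> i j. case (i, j) of ((i1,i2,i3), (j1,j2,j3)) \<Rightarrow> A $ i2 $ j2 * B $ (i1,i3) $ (j1,j3))"

definition tensor_3_12 :: "mat2 \<Rightarrow> mat4 \<Rightarrow> mat8" where
  "tensor_3_12 A B = (\<chi> i j. case (i, j) of ((i1,i2,i3), (j1,j2,j3)) \<Rightarrow> A $ i3 $ j3 * B $ (i1,i2) $ (j1,j2))"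

definition biseparable :: "mat8 \<Rightarrow> bool" where
  "biseparable \<rho> \<longleftrightarrow> (\<exists>(p1::real) p2 p3 r1 r23 r2 r13 r3 r12.
     0 \<le> p1 \<and> 0 \<le> p2 \<and> 0 \<le> p3 \<and> p1 + p2 + p3 = 1 \<and>
     density_mat r1 \<and> density_mat r23 \<and> density_mat r2 \<and> density_mat r13 \<and>
     density_mat r3 \<and> density_mat r12 \<and>
     \<rho> = p1 *\<^sub>R tensor_1_23 r1 r23 + p2 *\<^sub>R tensor_2_13 r2 r13
        + p3 *\<^sub>R tensor_3_12 r3 r12)"

definition genuinely_entangled :: "mat8 \<Rightarrow> bool" where
  "genuinely_entangled \<rho> \<longleftrightarrow> density_mat \<rho> \<and> \<not> biseparable \<rho>"

definition mapP :: "mat2 \<Rightarrow> mat2" where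
  "mapP X = (\<chi> i j. if i = j then (X $ 0 $ 0 + X $ 1 $ 1) / 2 else X $ i $ j)"

text \<open>L \<otimes> I \<otimes> I, I \<otimes> L \<otimes> I, I \<otimes> I \<otimes> L for a (linear) map L on M_2.\<close>
definition on_qubit1 :: "(mat2 \<Rightarrow> mat2) \<Rightarrow> mat8 \<Rightarrow> mat8" where
  "on_qubit1 L \<rho> = (\<chi> i j. case (i, j) of ((i1,i2,i3), (j1,j2,j3)) \<Rightarrow>
      L (\<chi> a b. \<rho> $ (a,i2,i3) $ (b,j2,j3)) $ i1 $ j1)"

definition on_qubit2 :: "(mat2 \<Rightarrow> mat2) \<Rightarrow> mat8 \<Rightarrow> mat8" where
  "on_qubit2 L \<rho> = (\<chi> i j. case (i, j) of ((i1,i2,i3), (j1,j2,j3)) \<Rightarrow>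
      L (\<chi> a b. \<rho> $ (i1,a,i3) $ (j1,b,j3)) $ i2 $ j2)"

definition on_qubit3 :: "(mat2 \<Rightarrow> mat2) \<Rightarrow> mat8 \<Rightarrow> mat8" where
  "on_qubit3 L \<rho> = (\<chi> i j. case (i, j) of ((i1,i2,i3), (j1,j2,j3)) \<Rightarrow>
      L (\<chi> a b. \<rho> $ (i1,i2,a) $ (j1,j2,b)) $ i3 $ j3)"

definition Phi3 :: "mat8 \<Rightarrow> mat8" where
  "Phi3 \<rho> = on_qubit1 mapP \<rho> + on_qubit2 mapP \<rho> + on_qubit3 mapP \<rho>
             + mat (trace \<rho> / 2)"

definition proj :: "complex^'n \<Rightarrow> complex^'n^'n" where
  "proj v = (\<chi> i j. v $ i * cnj (v $ j))"

definition ghz :: "complex^idx3" where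
  "ghz = (\<chi> i. if i = (0,0,0) \<or> i = (1,1,1) then complex_of_real (1 / sqrt 2) else 0)"

definition ghz_tilde :: "complex^idx3" where
  "ghz_tilde = (\<chi> i. if i = (0,0,0) then complex_of_real (1 / sqrt 2)
                      else if i = (1,1,1) then - complex_of_real (1 / sqrt 2) else 0)"

definition W_ghz :: mat8 where
  "W_ghz = Phi3 (proj ghz)"

end

theory Submission
  imports Defs
begin

lemma UNIV2: "(UNIV :: 2 set) = {0, 1}"
  using exhaust_2 by (auto; metis zero_neq_one)
lemma sum2': "(\<Sum>i\<in>(UNIV::2 set). f i) = f 0 + f 1" unfolding UNIV2 by simp
lemma sumpair: "(\<Sum>x\<in>(UNIV::('a::finite\<times>'b::finite) set). f x) = (\<Sum>a\<in>UNIV. \<Sum>b\<in>UNIV. f (a,b))"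
  by (simp add: sum.cartesian_product UNIV_Times_UNIV[symmetric] del: UNIV_Times_UNIV)
lemma ex2: "(x::2) = 0 \<or> x = 1" using UNIV2 by auto

lemma half: "complex_of_real (1 / sqrt 2) * complex_of_real (1 / sqrt 2) = 1/2"
proof -
  have "complex_of_real (1 / sqrt 2) * complex_of_real (1 / sqrt 2) = complex_of_real (1 / sqrt 2 * (1 / sqrt 2))"
    by (simp only: of_real_mult)
  also have "1 / sqrt 2 * (1 / sqrt 2) = (1/2::real)" by (simp add: power_divide power2_eq_square[symmetric])
  finally show ?thesis by simp
qed

lemma proj_ghz: "proj ghz $ i $ j = (if (i = (0,0,0) \<or> i = (1,1,1)) \<and> (j = (0,0,0) \<or> j = (1,1,1)) then 1/2 else 0)"
  unfolding proj_def ghz_def using half by simp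

lemma proj_gen: "c * cnj c = 1/2 \<Longrightarrow> proj (\<chi> i. if i = (0,0,0) then c else if i = (1,1,1) then - c else 0) $ i $ j = (if (i = (0,0,0) \<or> i = (1,1,1)) \<and> (j = (0,0,0) \<or> j = (1,1,1)) then (if i = j then 1/2 else - 1/2) else 0)"
  unfolding proj_def by auto

lemma proj_ghzt: "proj ghz_tilde $ i $ j = (if (i = (0,0,0) \<or> i = (1,1,1)) \<and> (j = (0,0,0) \<or> j = (1,1,1)) then (if i = j then 1/2 else - 1/2) else 0)"
proof -
  have "complex_of_real (1 / sqrt 2) * cnj (complex_of_real (1 / sqrt 2)) = 1/2"
    by (simp only: complex_cnj_complex_of_real half)
  from proj_gen[OF this] show ?thesis unfolding ghz_tilde_def .
qed

lemma tr_ghz: "trace (proj ghz) = 1"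
  unfolding trace_def by (simp add: sumpair sum2' proj_ghz)

definition Wf :: "idx3 \<Rightarrow> idx3 \<Rightarrow> complex" where
 "Wf i j = (if i = j then (if i = (0,0,0) \<or> i = (1,1,1) then 5/4 else 3/4)
   else if (i = (0,0,0) \<and> j = (1,1,1)) \<or> (i = (1,1,1) \<and> j = (0,0,0)) then 3/2 else 0)"

lemma oq1: "on_qubit1 mapP r $ (i1,i2,i3) $ (j1,j2,j3) = (if i1 = j1 then (r $ (0,i2,i3) $ (0,j2,j3) + r $ (1,i2,i3) $ (1,j2,j3)) / 2 else r $ (i1,i2,i3) $ (j1,j2,j3))"
  unfolding on_qubit1_def mapP_def by simp
lemma oq2: "on_qubit2 mapP r $ (i1,i2,i3) $ (j1,j2,j3) = (if i2 = j2 then (r $ (i1,0,i3) $ (j1,0,j3) + r $ (i1,1,i3) $ (j1,1,j3)) / 2 else r $ (i1,i2,i3) $ (j1,j2,j3))"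
  unfolding on_qubit2_def mapP_def by simp
lemma oq3: "on_qubit3 mapP r $ (i1,i2,i3) $ (j1,j2,j3) = (if i3 = j3 then (r $ (i1,i2,0) $ (j1,j2,0) + r $ (i1,i2,1) $ (j1,j2,1)) / 2 else r $ (i1,i2,i3) $ (j1,j2,j3))"
  unfolding on_qubit3_def mapP_def by simp

lemma W_entry3: "W_ghz $ (i1,i2,i3) $ (j1,j2,j3) = Wf (i1,i2,i3) (j1,j2,j3)"
proof -
  have "W_ghz $ (i1,i2,i3) $ (j1,j2,j3) = on_qubit1 mapP (proj ghz) $ (i1,i2,i3) $ (j1,j2,j3) + on_qubit2 mapP (proj ghz) $ (i1,i2,i3) $ (j1,j2,j3) + on_qubit3 mapP (proj ghz) $ (i1,i2,i3) $ (j1,j2,j3) + (if (i1,i2,i3) = (j1,j2,j3) then 1/2 else 0)"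
    unfolding W_ghz_def Phi3_def tr_ghz mat_def by simp
  also have "\<dots> = Wf (i1,i2,i3) (j1,j2,j3)"
    unfolding oq1 oq2 oq3 proj_ghz Wf_def
    using ex2[of i1] ex2[of i2] ex2[of i3] ex2[of j1] ex2[of j2] ex2[of j3]
    by (elim disjE) simp_all
  finally show ?thesis .
qed
lemma W_entry: "W_ghz $ i $ j = Wf i j" using W_entry3 by (cases i, cases j) auto

lemma trace_W: "trace (W_ghz ** r) = 3/4 * trace r + 1/2 * (r $ (0,0,0) $ (0,0,0) + r $ (1,1,1) $ (1,1,1))
   + 3/2 * (r $ (0,0,0) $ (1,1,1) + r $ (1,1,1) $ (0,0,0))"
  unfolding trace_def matrix_matrix_mult_def
  by (simp add: W_entry Wf_def sumpair sum2' algebra_simps)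


lemma mi: "(a::complex) * (if b then c else 0) = (if b then a * c else 0)" by simp
lemma im: "(if b then c else 0) * (a::complex) = (if b then c * a else 0)" by simp
lemma ci: "cnj (if b then c else 0) = (if b then cnj c else 0)" by simp
lemma qf2:
  fixes M :: "complex^'n^'n"
  assumes "p \<noteq> q"
  shows "(\<Sum>i\<in>UNIV. cnj ((\<chi> k. if k = p then x else if k = q then y else 0) $ i) *
           (M *v (\<chi> k. if k = p then x else if k = q then y else 0)) $ i)
       = cnj x * (M $ p $ p * x + M $ p $ q * y) + cnj y * (M $ q $ p * x + M $ q $ q * y)"
proof -
  let ?v = "(\<chi> k. if k = p then x else if k = q then y else 0) :: complex^'n"
  have v: "?v $ k = (if k = p then x else 0) + (if k = q then y else 0)" for k
    using assms by simp
  have v': "(if k = p then x else if k = q then y else 0) = (if k = p then x else 0) + (if k = q then y else 0)" for k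
    using assms by simp
  have Mv: "(M *v ?v) $ i = M $ i $ p * x + M $ i $ q * y" for i
  proof -
    have "(M *v ?v) $ i = (\<Sum>j\<in>UNIV. M $ i $ j * ((if j = p then x else 0) + (if j = q then y else 0)))"
      unfolding matrix_vector_mult_def by (simp only: vec_lambda_beta v')
    also have "\<dots> = (\<Sum>j\<in>UNIV. (if j = p then M $ i $ j * x else 0)) + (\<Sum>j\<in>UNIV. (if j = q then M $ i $ j * y else 0))"
      by (simp only: distrib_left sum.distrib mi)
    also have "\<dots> = M $ i $ p * x + M $ i $ q * y" by simp
    finally show ?thesis .
  qed
  have "(\<Sum>i\<in>UNIV. cnj (?v $ i) * (M *v ?v) $ i) = (\<Sum>i\<in>UNIV. (if i = p then cnj x * (M *v ?v) $ i else 0)) + (\<Sum>i\<in>UNIV. (if i = q then cnj y * (M *v ?v) $ i else 0))"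
    by (simp only: v complex_cnj_add distrib_right sum.distrib ci im)
  also have "\<dots> = cnj x * (M *v ?v) $ p + cnj y * (M *v ?v) $ q" by simp
  finally show ?thesis by (simp only: Mv)
qed

lemma psd_entries:
  fixes M :: "complex^'n^'n"
  assumes h: "hermitian_mat M" and ps: "psd_mat M" and pq: "p \<noteq> q"
  shows "Im (M $ p $ p) = 0" "0 \<le> Re (M $ p $ p)" "M $ q $ p = cnj (M $ p $ q)"
    and "(cmod (M $ p $ q))^2 \<le> Re (M $ p $ p) * Re (M $ q $ q)"
proof -
  have hh: "M $ j $ i = cnj (M $ i $ j)" for i j
    using h unfolding hermitian_mat_def cmat_adj_def by (metis vec_lambda_beta complex_cnj_cnj)
  show "M $ q $ p = cnj (M $ p $ q)" by (rule hh)
  have imr: "Im (M $ i $ i) = 0" for i using hh[of i i] by (metis Reals_cnj_iff complex_is_Real_iff)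
  show "Im (M $ p $ p) = 0" by (rule imr)
  have Q: "Im (cnj x * (M $ p $ p * x + M $ p $ q * y) + cnj y * (M $ q $ p * x + M $ q $ q * y)) = 0 \<and>
      0 \<le> Re (cnj x * (M $ p $ p * x + M $ p $ q * y) + cnj y * (M $ q $ p * x + M $ q $ q * y))" for x y
    using ps[unfolded psd_mat_def, rule_format, of "\<chi> k. if k = p then x else if k = q then y else 0"]
    unfolding qf2[OF pq] Let_def .
  show "0 \<le> Re (M $ p $ p)" using Q[of 1 0] by simp
  define a where "a = Re (M $ p $ p)"
  define d where "d = Re (M $ q $ q)"
  define b where "b = M $ p $ q"
  have A: "M $ p $ p = of_real a" using imr[of p] unfolding a_def by (simp add: complex_eq_iff)
  have D: "M $ q $ q = of_real d" using imr[of q] unfolding d_def by (simp add: complex_eq_iff)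
  have B: "M $ q $ p = cnj b" unfolding b_def by (rule hh)
  have Bq: "M $ p $ q = b" unfolding b_def ..
  have Q': "0 \<le> Re (cnj x * (of_real a * x + b * y) + cnj y * (cnj b * x + of_real d * y))" for x y
    using Q[of x y] unfolding A B D Bq by blast
  have d0: "0 \<le> d" using Q[of 0 1] D by simp
  have bb: "b * cnj b = of_real ((cmod b)^2)" by (rule complex_norm_square[symmetric])
  have bb': "(complex_of_real (cmod b))^2 = b * cnj b" using bb by simp
  show "(cmod (M $ p $ q))^2 \<le> Re (M $ p $ p) * Re (M $ q $ q)"
  proof (cases "d = 0")
    case False
    have "cnj (of_real d) * (of_real a * of_real d + b * (- cnj b)) + cnj (- cnj b) * (cnj b * of_real d + of_real d * (- cnj b))
       = of_real (d * (a * d - (cmod b)^2))"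
      by (simp add: algebra_simps bb')
    then have "0 \<le> d * (a * d - (cmod b)^2)" using Q'[of "of_real d" "- cnj b"] by (simp only: Re_complex_of_real)
    then have "0 \<le> a * d - (cmod b)^2" using False d0 by (simp add: zero_le_mult_iff)
    then show ?thesis by (simp add: a_def d_def b_def)
  next
    case True
    show ?thesis
    proof (cases "b = 0")
      case True then show ?thesis using \<open>d = 0\<close> by (simp add: a_def d_def b_def)
    next
      case False
      define t where "t = (a + 1) / (2 * (cmod b)^2)"
      have nb: "(cmod b)^2 > 0" using False by simp
      have "cnj 1 * (of_real a * 1 + b * (- of_real t * cnj b)) + cnj (- of_real t * cnj b) * (cnj b * 1 + 0 * (- of_real t * cnj b))
         = of_real (a - 2 * t * (cmod b)^2)"
        by (simp add: algebra_simps bb')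
      also have "a - 2 * t * (cmod b)^2 = -1" unfolding t_def using nb by (simp add: field_simps)
      finally have "Re (cnj 1 * (of_real a * 1 + b * (- of_real t * cnj b)) + cnj (- of_real t * cnj b) * (cnj b * 1 + of_real d * (- of_real t * cnj b))) = -1"
        using \<open>d = 0\<close> by simp
      with Q'[of 1 "- of_real t * cnj b"] show ?thesis by linarith
    qed
  qed
qed

lemma key:
  fixes A :: mat2 and B :: mat4
  assumes dA: "density_mat A" and dB: "density_mat B"
  shows "Im (3/4 + 1/2*(A$0$0 * B$(0,0)$(0,0) + A$1$1 * B$(1,1)$(1,1)) + 3/2*(A$0$1 * B$(0,0)$(1,1) + A$1$0 * B$(1,1)$(0,0))) = 0
       \<and> 0 \<le> Re (3/4 + 1/2*(A$0$0 * B$(0,0)$(0,0) + A$1$1 * B$(1,1)$(1,1)) + 3/2*(A$0$1 * B$(0,0)$(1,1) + A$1$0 * B$(1,1)$(0,0)))"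
proof -
  have hA: "hermitian_mat A" "psd_mat A" "trace A = 1" using dA unfolding density_mat_def by auto
  have hB: "hermitian_mat B" "psd_mat B" "trace B = 1" using dB unfolding density_mat_def by auto
  have n01: "(0::2) \<noteq> 1" by simp
  note EA = psd_entries[OF hA(1,2) n01] psd_entries[OF hA(1,2) n01[symmetric]]
  have n03: "((0,0)::idx2) \<noteq> (1,1)" by simp
  have n30: "((0,1)::idx2) \<noteq> (0,0)" "((1,0)::idx2) \<noteq> (0,0)" by simp_all
  note EB = psd_entries[OF hB(1,2) n03] psd_entries[OF hB(1,2) n03[symmetric]]
    psd_entries[OF hB(1,2) n30(1)] psd_entries[OF hB(1,2) n30(2)]
  define a0 where "a0 = Re (A$0$0)"
  define a1 where "a1 = Re (A$1$1)"
  define b0 where "b0 = Re (B$(0,0)$(0,0))"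
  define b3 where "b3 = Re (B$(1,1)$(1,1))"
  define x where "x = A$0$1"
  define y where "y = B$(0,0)$(1,1)"
  have A0: "A$0$0 = of_real a0" using EA(1) unfolding a0_def by (simp add: complex_eq_iff)
  have A1: "A$1$1 = of_real a1" using EA(5) unfolding a1_def by (simp add: complex_eq_iff)
  have B0: "B$(0,0)$(0,0) = of_real b0" using EB(1) unfolding b0_def by (simp add: complex_eq_iff)
  have B3: "B$(1,1)$(1,1) = of_real b3" using EB(5) unfolding b3_def by (simp add: complex_eq_iff)
  have A10: "A$1$0 = cnj x" using EA(3) unfolding x_def .
  have B30: "B$(1,1)$(0,0) = cnj y" using EB(3) unfolding y_def .
  have ge: "0 \<le> a0" "0 \<le> a1" "0 \<le> b0" "0 \<le> b3" "0 \<le> Re (B$(0,1)$(0,1))" "0 \<le> Re (B$(1,0)$(1,0))"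
    using EA EB unfolding a0_def a1_def b0_def b3_def by auto
  have trA: "a0 + a1 = 1" using hA(3) unfolding trace_def sum2' a0_def a1_def
    by (metis one_complex.sel(1) plus_complex.sel(1))
  have "Re (trace B) = b0 + Re (B$(0,1)$(0,1)) + Re (B$(1,0)$(1,0)) + b3"
    unfolding trace_def b0_def b3_def by (simp add: sumpair sum2')
  then have trB: "b0 + b3 \<le> 1" using hB(3) ge by simp
  have cx: "(cmod x)^2 \<le> a0 * a1" using EA(4) unfolding x_def a0_def a1_def .
  have cy: "(cmod y)^2 \<le> b0 * b3" using EB(4) unfolding y_def b0_def b3_def .
  have e4: "4 * (u * v) = (u+v)^2 - (u-v)^2" for u v :: real by (simp add: power2_eq_square algebra_simps)
  have "a0 * a1 \<le> 1/4" using e4[of a0 a1] trA zero_le_power2[of "a0 - a1"] by (simp only: trA power_one)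
  then have "(cmod x)^2 \<le> (1/2)^2" using cx by (simp add: power2_eq_square)
  then have mx: "cmod x \<le> 1/2" by (rule power2_le_imp_le) simp
  have "(b0+b3)^2 \<le> 1" using trB ge by (simp add: power_le_one)
  then have "b0 * b3 \<le> 1/4" using e4[of b0 b3] zero_le_power2[of "b0 - b3"] by linarith
  then have "(cmod y)^2 \<le> (1/2)^2" using cy by (simp add: power2_eq_square)
  then have my: "cmod y \<le> 1/2" by (rule power2_le_imp_le) simp
  have mz: "cmod (x * y) \<le> 1/4" 
  proof -
    have "cmod x * cmod y \<le> 1/2 * (1/2)" by (rule mult_mono) (use mx my in auto)
    then show ?thesis by (simp add: norm_mult)
  qed
  have "- cmod (x*y) \<le> Re (x*y)" using abs_Re_le_cmod[of "x*y"] by linarith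
  then have reb: "- 1/4 \<le> Re (x*y)" using mz by linarith
  have ab: "0 \<le> a0 * b0 + a1 * b3" using ge by simp
  show ?thesis unfolding A0 A1 B0 B3 A10 B30 x_def[symmetric] y_def[symmetric]
    using reb ab by (simp add: field_simps)
qed


lemma tr_t1: "trace (tensor_1_23 A B) = trace A * trace B"
  by (simp add: trace_def tensor_1_23_def sumpair sum2' algebra_simps)
lemma tr_t2: "trace (tensor_2_13 A B) = trace A * trace B"
  by (simp add: trace_def tensor_2_13_def sumpair sum2' algebra_simps)
lemma tr_t3: "trace (tensor_3_12 A B) = trace A * trace B"
  by (simp add: trace_def tensor_3_12_def sumpair sum2' algebra_simps)

lemma good_tensors:
  assumes dA: "density_mat A" and dB: "density_mat B"
  shows "Im (trace (W_ghz ** tensor_1_23 A B)) = 0 \<and> 0 \<le> Re (trace (W_ghz ** tensor_1_23 A B))"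
    "Im (trace (W_ghz ** tensor_2_13 A B)) = 0 \<and> 0 \<le> Re (trace (W_ghz ** tensor_2_13 A B))"
    "Im (trace (W_ghz ** tensor_3_12 A B)) = 0 \<and> 0 \<le> Re (trace (W_ghz ** tensor_3_12 A B))"
proof -
  have t: "trace A = 1" "trace B = 1" using dA dB unfolding density_mat_def by auto
  show "Im (trace (W_ghz ** tensor_1_23 A B)) = 0 \<and> 0 \<le> Re (trace (W_ghz ** tensor_1_23 A B))"
    unfolding trace_W tr_t1 t using key[OF dA dB] by (simp add: tensor_1_23_def)
  show "Im (trace (W_ghz ** tensor_2_13 A B)) = 0 \<and> 0 \<le> Re (trace (W_ghz ** tensor_2_13 A B))"
    unfolding trace_W tr_t2 t using key[OF dA dB] by (simp add: tensor_2_13_def)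
  show "Im (trace (W_ghz ** tensor_3_12 A B)) = 0 \<and> 0 \<le> Re (trace (W_ghz ** tensor_3_12 A B))"
    unfolding trace_W tr_t3 t using key[OF dA dB] by (simp add: tensor_3_12_def)
qed

lemma scc: "(c *\<^sub>R (X :: complex^'n^'n)) $ i $ j = of_real c * X $ i $ j"
  by (simp only: vector_scaleR_component) (simp only: scaleR_conv_of_real)
lemma trace_scaleR: "trace (c *\<^sub>R (X :: complex^'n^'n)) = of_real c * trace X"
  unfolding trace_def by (simp only: scc sum_distrib_left)

lemma part1:
  assumes "biseparable \<rho>"
  shows "Im (trace (W_ghz ** \<rho>)) = 0 \<and> 0 \<le> Re (trace (W_ghz ** \<rho>))"
proof -
  obtain p1 p2 p3 r1 r23 r2 r13 r3 r12 where
    h: "0 \<le> p1" "0 \<le> p2" "0 \<le> p3" and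
    d: "density_mat r1" "density_mat r23" "density_mat r2" "density_mat r13" "density_mat r3" "density_mat r12" and
    r: "\<rho> = p1 *\<^sub>R tensor_1_23 r1 r23 + p2 *\<^sub>R tensor_2_13 r2 r13 + p3 *\<^sub>R tensor_3_12 r3 r12"
    using assms unfolding biseparable_def by blast
  let ?T1 = "tensor_1_23 r1 r23" and ?T2 = "tensor_2_13 r2 r13" and ?T3 = "tensor_3_12 r3 r12"
  have lin: "trace (W_ghz ** \<rho>) = of_real p1 * trace (W_ghz ** ?T1) + of_real p2 * trace (W_ghz ** ?T2) + of_real p3 * trace (W_ghz ** ?T3)"
    unfolding r trace_W trace_add trace_scaleR vector_add_component scc by (simp add: algebra_simps)
  have g1: "Im (trace (W_ghz ** ?T1)) = 0 \<and> 0 \<le> Re (trace (W_ghz ** ?T1))" by (rule good_tensors(1)[OF d(1,2)])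
  have g2: "Im (trace (W_ghz ** ?T2)) = 0 \<and> 0 \<le> Re (trace (W_ghz ** ?T2))" by (rule good_tensors(2)[OF d(3,4)])
  have g3: "Im (trace (W_ghz ** ?T3)) = 0 \<and> 0 \<le> Re (trace (W_ghz ** ?T3))" by (rule good_tensors(3)[OF d(5,6)])
  show ?thesis unfolding lin using g1 g2 g3 h by simp
qed

lemma proj_herm: "hermitian_mat (proj u)"
  unfolding hermitian_mat_def cmat_adj_def proj_def by (simp add: mult.commute)

lemma proj_psd: "psd_mat (proj (u :: complex^'n))"
  unfolding psd_mat_def Let_def
proof
  fix v :: "complex^'n"
  define c where "c = (\<Sum>j\<in>UNIV. cnj (u $ j) * v $ j)"
  have mv: "(proj u *v v) $ i = u $ i * c" for i
    unfolding matrix_vector_mult_def proj_def c_def by (simp add: sum_distrib_left algebra_simps)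
  have "(\<Sum>i\<in>UNIV. cnj (v $ i) * (proj u *v v) $ i) = (\<Sum>i\<in>UNIV. cnj (v $ i) * u $ i) * c"
    unfolding mv by (simp only: sum_distrib_right mult.assoc)
  also have "(\<Sum>i\<in>UNIV. cnj (v $ i) * u $ i) = cnj c" unfolding c_def by (simp add: mult.commute)
  also have "cnj c * c = of_real ((cmod c)^2)" by (metis complex_norm_square mult.commute)
  finally have e: "(\<Sum>i\<in>UNIV. cnj (v $ i) * (proj u *v v) $ i) = of_real ((cmod c)^2)" .
  show "Im (\<Sum>i\<in>UNIV. cnj (v $ i) * (proj u *v v) $ i) = 0 \<and> 0 \<le> Re (\<Sum>i\<in>UNIV. cnj (v $ i) * (proj u *v v) $ i)"
    unfolding e by simp
qed

lemma tr_ghzt: "trace (proj ghz_tilde) = 1"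
  unfolding trace_def by (simp add: sumpair sum2' proj_ghzt)

lemma val_t: "trace (W_ghz ** proj ghz_tilde) = - 1 / 4"
  unfolding trace_W tr_ghzt by (simp add: proj_ghzt)

theorem proposition2:
  shows "(\<forall>\<rho>. biseparable \<rho> \<longrightarrow>
            Im (trace (W_ghz ** \<rho>)) = 0 \<and> 0 \<le> Re (trace (W_ghz ** \<rho>)))
     \<and> genuinely_entangled (proj ghz_tilde)
     \<and> trace (W_ghz ** proj ghz_tilde) = - 1 / 4"
proof (intro conjI allI impI)
  show "Im (trace (W_ghz ** \<rho>)) = 0" "0 \<le> Re (trace (W_ghz ** \<rho>))" if "biseparable \<rho>" for \<rho>
    using part1[OF that] by auto
  show "trace (W_ghz ** proj ghz_tilde) = - 1 / 4" by (rule val_t)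
  show "genuinely_entangled (proj ghz_tilde)"
    unfolding genuinely_entangled_def density_mat_def
  proof (intro conjI)
    show "hermitian_mat (proj ghz_tilde)" by (rule proj_herm)
    show "psd_mat (proj ghz_tilde)" by (rule proj_psd)
    show "trace (proj ghz_tilde) = 1" by (rule tr_ghzt)
    show "\<not> biseparable (proj ghz_tilde)"
    proof
      assume "biseparable (proj ghz_tilde)"
      from part1[OF this] have "0 \<le> Re (trace (W_ghz ** proj ghz_tilde))" by simp
      then show False unfolding val_t by simp
    qed
  qed
qed

end
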